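(* Let $\mathcal G=\langle V=V_{\mathrm{Min}}\uplus V_{\mathrm{Max}}, V_T, A, E, \omega\rangle$ be a finite weighted game and $c\colon V_T\to\mathbb Z$. Assume that the subgraph induced by $V\setminus V_T$ is strongly connected, that every cycle all of whose vertices lie in $V\setminus V_T$ has positive weight, and that no vertex has value $+\infty$ (with respect to $c$). Let $n=|V\setminus V_T|$. Define $\vec x^0$ by $\vec x^0_v=c(v)$ for $v\in V_T$ and $\vec x^0_v=+\infty$ for $v\in V\setminus V_T$, and $\vec x^i=F(\vec x^{i-1})$ for $i>0$. Then $\vec x^{n+k}=\vec x^n$ for all $k\ge 0$.
   Context: A weighted game has vertices $V$ partitioned into vertices of Min and of Max, targets $V_T\subseteq V_{\mathrm{Min}}$, alphabet $A$, edges $E\subseteq V\times A\times V$, weights $\omega\colon E\to\mathbb Z$, and is deadlock-free (every vertex has an outgoing edge) and deterministic (for each $(v,a)$ at most one $v'$ with $(v,a,v')\in E$). A cycle is a finite sequence of consecutive edges starting and ending at the same vertex (length $\ge1$); its weight is the sum of its edge weights. Strategies, outcomes and values: a strategy of a player chooses, after each finite play ending in one of its vertices, a letter of an outgoing edge; with target values $c\colon V_T\to\mathbb Z$, the weight of a play is $+\infty$ if it never visits $V_T$, and otherwise the sum of the weights of its edges up to the first visit of some $t\in V_T$ plus $c(t)$; the value of $v$ is $\inf_{\sigma_{\mathrm{Min}}}\sup_{\sigma_{\mathrm{Max}}}$ (equal to $\sup_{\sigma_{\mathrm{Max}}}\inf_{\sigma_{\mathrm{Min}}}$) of the weight of the outcome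 from $v$. The operator $F\colon(\mathbb Z\cup\{-\infty,+\infty\})^V\to(\mathbb Z\cup\{-\infty,+\infty\})^V$ is defined by $F(\vec x)_v=c(v)$ if $v\in V_T$, $F(\vec x)_v=\min_{e=(v,a,v')\in E}\omega(e)+\vec x_{v'}$ if $v\in V_{\mathrm{Min}}\setminus V_T$, and $F(\vec x)_v=\max_{e=(v,a,v')\in E}\omega(e)+\vec x_{v'}$ if $v\in V_{\mathrm{Max}}$. *)

theory Defs
  imports "HOL-Library.Extended_Real"
begin

text \<open>Vertices form a finite type 'v (so V = UNIV); Min owns VMin,
  Max owns the complement -VMin; targets VT are a subset of VMin; edges are
  triples (v, a, v') with letters of type 'a; weights w and target values c.\<close>

type_synonym ('v, 'a) edge = "'v \<times> 'a \<times> 'v"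

definition src :: "('v, 'a) edge \<Rightarrow> 'v" where "src e = fst e"
definition lbl :: "('v, 'a) edge \<Rightarrow> 'a" where "lbl e = fst (snd e)"
definition tgt :: "('v, 'a) edge \<Rightarrow> 'v" where "tgt e = snd (snd e)"

definition deadlock_free :: "('v, 'a) edge set \<Rightarrow> bool" where
  "deadlock_free E \<longleftrightarrow> (\<forall>v. \<exists>a v'. (v, a, v') \<in> E)"

definition deterministic :: "('v, 'a) edge set \<Rightarrow> bool" where
  "deterministic E \<longleftrightarrow> (\<forall>v a v1 v2. (v, a, v1) \<in> E \<longrightarrow> (v, a, v2) \<in> E \<longrightarrow> v1 = v2)"

definition weighted_game :: "'v set \<Rightarrow> 'v set \<Rightarrow> ('v, 'a) edge set \<Rightarrow> bool" where
  "weighted_game VMin VT E \<longleftrightarrow> VT \<subseteq> VMin \<and> finite E \<and> deadlock_free E \<and> deterministic E"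

definition F_op :: "'v set \<Rightarrow> 'v set \<Rightarrow> ('v, 'a) edge set \<Rightarrow> (('v, 'a) edge \<Rightarrow> int)
    \<Rightarrow> ('v \<Rightarrow> int) \<Rightarrow> ('v \<Rightarrow> ereal) \<Rightarrow> ('v \<Rightarrow> ereal)" where
  "F_op VMin VT E w c x = (\<lambda>v.
     if v \<in> VT then ereal (of_int (c v))
     else if v \<in> VMin then Min ((\<lambda>e. ereal (of_int (w e)) + x (tgt e)) ` {e \<in> E. src e = v})
     else Max ((\<lambda>e. ereal (of_int (w e)) + x (tgt e)) ` {e \<in> E. src e = v}))"

definition is_cycle :: "('v, 'a) edge set \<Rightarrow> ('v, 'a) edge list \<Rightarrow> bool" where
  "is_cycle E es \<longleftrightarrow> es \<noteq> [] \<and> set es \<subseteq> E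
     \<and> (\<forall>i. Suc i < length es \<longrightarrow> tgt (es ! i) = src (es ! Suc i))
     \<and> tgt (last es) = src (hd es)"

definition cycle_weight :: "(('v, 'a) edge \<Rightarrow> int) \<Rightarrow> ('v, 'a) edge list \<Rightarrow> int" where
  "cycle_weight w es = sum_list (map w es)"

definition cycle_vertices :: "('v, 'a) edge list \<Rightarrow> 'v set" where
  "cycle_vertices es = src ` set es \<union> tgt ` set es"

definition induced_rel :: "('v, 'a) edge set \<Rightarrow> 'v set \<Rightarrow> ('v \<times> 'v) set" where
  "induced_rel E U = {(u, v). u \<in> U \<and> v \<in> U \<and> (\<exists>a. (u, a, v) \<in> E)}"

definition strongly_connected_on :: "('v, 'a) edge set \<Rightarrow> 'v set \<Rightarrow> bool" where
  "strongly_connected_on E U \<longleftrightarrow> (\<forall>u\<in>U. \<forall>v\<in>U. (u, v) \<in> (induced_rel E U)\<^sup>*)"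

text \<open>Plays, strategies, outcomes. A finite play (history) is a start vertex together with
  the list of edges taken so far. A strategy maps histories to letters.\<close>
type_synonym ('v, 'a) strategy = "'v \<times> ('v, 'a) edge list \<Rightarrow> 'a"

definition last_vertex :: "'v \<Rightarrow> ('v, 'a) edge list \<Rightarrow> 'v" where
  "last_vertex v0 es = (if es = [] then v0 else tgt (last es))"

definition strategy_ok :: "('v, 'a) edge set \<Rightarrow> 'v set \<Rightarrow> ('v, 'a) strategy \<Rightarrow> bool" where
  "strategy_ok E P \<sigma> \<longleftrightarrow>
     (\<forall>v0 es. last_vertex v0 es \<in> P \<longrightarrow> (\<exists>v'. (last_vertex v0 es, \<sigma> (v0, es), v') \<in> E))"

definition next_edge :: "('v, 'a) edge set \<Rightarrow> 'v set \<Rightarrow> ('v, 'a) strategy \<Rightarrow> ('v, 'a) strategy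
    \<Rightarrow> 'v \<Rightarrow> ('v, 'a) edge list \<Rightarrow> ('v, 'a) edge" where
  "next_edge E VMin sMin sMax v0 es =
     (let u = last_vertex v0 es;
          a = (if u \<in> VMin then sMin (v0, es) else sMax (v0, es))
      in THE e. e \<in> E \<and> src e = u \<and> lbl e = a)"

primrec outcome_prefix :: "('v, 'a) edge set \<Rightarrow> 'v set \<Rightarrow> ('v, 'a) strategy \<Rightarrow> ('v, 'a) strategy
    \<Rightarrow> 'v \<Rightarrow> nat \<Rightarrow> ('v, 'a) edge list" where
  "outcome_prefix E VMin sMin sMax v0 0 = []"
| "outcome_prefix E VMin sMin sMax v0 (Suc n) =
     (let es = outcome_prefix E VMin sMin sMax v0 n in es @ [next_edge E VMin sMin sMax v0 es])"

definition play_vertex :: "('v, 'a) edge set \<Rightarrow> 'v set \<Rightarrow> ('v, 'a) strategy \<Rightarrow> ('v, 'a) strategy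
    \<Rightarrow> 'v \<Rightarrow> nat \<Rightarrow> 'v" where
  "play_vertex E VMin sMin sMax v0 i = last_vertex v0 (outcome_prefix E VMin sMin sMax v0 i)"

definition outcome_weight :: "'v set \<Rightarrow> 'v set \<Rightarrow> ('v, 'a) edge set \<Rightarrow> (('v, 'a) edge \<Rightarrow> int)
    \<Rightarrow> ('v \<Rightarrow> int) \<Rightarrow> ('v, 'a) strategy \<Rightarrow> ('v, 'a) strategy \<Rightarrow> 'v \<Rightarrow> ereal" where
  "outcome_weight VMin VT E w c sMin sMax v0 =
     (if \<exists>i. play_vertex E VMin sMin sMax v0 i \<in> VT
      then (let k = (LEAST i. play_vertex E VMin sMin sMax v0 i \<in> VT)
            in ereal (of_int (sum_list (map w (outcome_prefix E VMin sMin sMax v0 k))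
                              + c (play_vertex E VMin sMin sMax v0 k))))
      else \<infinity>)"

definition game_value :: "'v set \<Rightarrow> 'v set \<Rightarrow> ('v, 'a) edge set \<Rightarrow> (('v, 'a) edge \<Rightarrow> int)
    \<Rightarrow> ('v \<Rightarrow> int) \<Rightarrow> 'v \<Rightarrow> ereal" where
  "game_value VMin VT E w c v =
     (INF sMin\<in>{\<sigma>. strategy_ok E VMin \<sigma>}. SUP sMax\<in>{\<sigma>. strategy_ok E (- VMin) \<sigma>}.
        outcome_weight VMin VT E w c sMin sMax v)"

definition x0_vec :: "'v set \<Rightarrow> ('v \<Rightarrow> int) \<Rightarrow> 'v \<Rightarrow> ereal" where
  "x0_vec VT c = (\<lambda>v. if v \<in> VT then ereal (of_int (c v)) else \<infinity>)"

end

theory Submission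
  imports Defs
begin

definition vs :: "'v \<Rightarrow> ('v, 'a) edge list \<Rightarrow> 'v list" where
  "vs v es = v # map tgt es"

fun pth :: "('v, 'a) edge set \<Rightarrow> 'v \<Rightarrow> ('v, 'a) edge list \<Rightarrow> bool" where
  "pth E v [] = True"
| "pth E v (e # es) = (e \<in> E \<and> src e = v \<and> pth E (tgt e) es)"

lemma lv_Nil[simp]: "last_vertex v [] = v" by (simp add: last_vertex_def)
lemma lv_Cons: "last_vertex v (e # es) = last_vertex (tgt e) es" by (simp add: last_vertex_def)
lemma lv_append: "last_vertex v (xs @ ys) = last_vertex (last_vertex v xs) ys"
  by (simp add: last_vertex_def)

lemma pth_append: "pth E v (xs @ ys) \<longleftrightarrow> pth E v xs \<and> pth E (last_vertex v xs) ys"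
  by (induction xs arbitrary: v) (auto simp: lv_Cons)

lemma pth_props: "pth E u cs \<Longrightarrow> set cs \<subseteq> E \<and> (\<forall>i. Suc i < length cs \<longrightarrow> tgt (cs ! i) = src (cs ! Suc i))
   \<and> (cs \<noteq> [] \<longrightarrow> src (hd cs) = u)"
proof (induction cs arbitrary: u)
  case Nil then show ?case by simp
next
  case (Cons e es)
  then have IH: "set es \<subseteq> E \<and> (\<forall>i. Suc i < length es \<longrightarrow> tgt (es ! i) = src (es ! Suc i))
   \<and> (es \<noteq> [] \<longrightarrow> src (hd es) = tgt e)" and h: "e \<in> E" "src e = u" by auto
  have "\<forall>i. Suc i < length (e # es) \<longrightarrow> tgt ((e # es) ! i) = src ((e # es) ! Suc i)"
  proof (intro allI impI)
    fix i assume "Suc i < length (e # es)"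
    then show "tgt ((e # es) ! i) = src ((e # es) ! Suc i)"
      using IH by (cases i) (auto simp: hd_conv_nth)
  qed
  then show ?case using IH h by auto
qed

lemma pth_cycle: "pth E u cs \<Longrightarrow> cs \<noteq> [] \<Longrightarrow> last_vertex u cs = u \<Longrightarrow> is_cycle E cs"
  using pth_props[of E u cs] by (auto simp: is_cycle_def last_vertex_def)

lemma pth_verts: "pth E v es \<Longrightarrow> src ` set es \<union> tgt ` set es \<subseteq> set (vs v es)"
  by (induction es arbitrary: v) (auto simp: vs_def)

lemma vs_take: "vs v (take j es) = take (Suc j) (vs v es)"
  by (simp add: vs_def take_map)

lemma last_vs: "last (vs v es) = last_vertex v es"
  by (simp add: vs_def last_vertex_def last_map)

lemma ereal_int_add: "ereal (real_of_int (a + b)) = ereal (real_of_int a) + ereal (real_of_int b)"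
  by simp

locale gm =
  fixes VMin VT :: "'v::finite set" and E :: "('v, 'a) edge set"
    and w :: "('v, 'a) edge \<Rightarrow> int" and c :: "'v \<Rightarrow> int"
  assumes finE: "finite E" and dlf: "deadlock_free E"
    and pc: "\<And>es. is_cycle E es \<Longrightarrow> cycle_vertices es \<subseteq> - VT \<Longrightarrow> cycle_weight w es > 0"
begin

definition X :: "nat \<Rightarrow> 'v \<Rightarrow> ereal" where
  "X i = (F_op VMin VT E w c ^^ i) (x0_vec VT c)"

definition W :: "('v, 'a) edge list \<Rightarrow> int" where "W es = sum_list (map w es)"

lemma out_fin: "finite {e\<in>E. src e = u}" using finE by simp
lemma out_ne: "{e\<in>E. src e = u} \<noteq> {}"
  using dlf unfolding deadlock_free_def src_def by fastforce

lemma X_Suc: "X (Suc i) = F_op VMin VT E w c (X i)" by (simp add: X_def)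

lemma X_VT: "u \<in> VT \<Longrightarrow> X i u = ereal (real_of_int (c u))"
  by (cases i) (simp_all add: X_def x0_vec_def F_op_def)

lemma F_mono:
  assumes "\<And>u. x u \<le> y u"
  shows "F_op VMin VT E w c x u \<le> F_op VMin VT E w c y u"
proof -
  define S where "S = {e\<in>E. src e = u}"
  define f where "f = (\<lambda>e. ereal (real_of_int (w e)) + x (tgt e))"
  define g where "g = (\<lambda>e. ereal (real_of_int (w e)) + y (tgt e))"
  have fg: "f e \<le> g e" for e unfolding f_def g_def using assms by (simp add: add_left_mono)
  have fin: "finite (f ` S)" "finite (g ` S)" using out_fin S_def by auto
  have ne: "f ` S \<noteq> {}" "g ` S \<noteq> {}" using out_ne S_def by auto
  have "Min (f ` S) \<le> Min (g ` S)"
  proof -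
    obtain e0 where "e0 \<in> S" "Min (g ` S) = g e0" using Min_in[OF fin(2) ne(2)] by auto
    then show ?thesis using Min_le[OF fin(1)] fg by (metis image_eqI order_trans)
  qed
  moreover have "Max (f ` S) \<le> Max (g ` S)"
  proof -
    obtain e0 where "e0 \<in> S" "Max (f ` S) = f e0" using Max_in[OF fin(1) ne(1)] by auto
    then show ?thesis using Max_ge[OF fin(2)] fg by (metis image_eqI order_trans)
  qed
  ultimately show ?thesis unfolding F_op_def S_def f_def g_def by simp
qed

lemma X_dec: "X (Suc i) u \<le> X i u"
proof (induction i arbitrary: u)
  case 0
  have "X 0 = x0_vec VT c" by (simp add: X_def)
  then show ?case by (cases "u \<in> VT") (simp_all add: X_Suc x0_vec_def F_op_def)
next
  case (Suc i)
  then show ?case by (simp add: X_Suc F_mono)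
qed

lemma X_dec2: "X (m + k) u \<le> X m u"
proof (induction k)
  case 0 then show ?case by simp
next
  case (Suc k) then show ?case using X_dec[of "m + k" u] by simp
qed

lemma choose_edge:
  assumes "u \<notin> VT"
  shows "\<exists>e\<in>E. src e = u \<and> ereal (real_of_int (w e)) + X m (tgt e) \<le> X (Suc m) u
     \<and> X (Suc p) u \<le> ereal (real_of_int (w e)) + X p (tgt e)"
proof -
  define S where "S = {e\<in>E. src e = u}"
  define f where "f = (\<lambda>i e. ereal (real_of_int (w e)) + X i (tgt e))"
  have fin: "finite (f i ` S)" for i using out_fin S_def by auto
  have ne: "f i ` S \<noteq> {}" for i using out_ne S_def by auto
  have XS: "X (Suc i) u = (if u \<in> VMin then Min (f i ` S) else Max (f i ` S))" for i
    using assms unfolding X_Suc F_op_def S_def f_def by simp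
  show ?thesis
  proof (cases "u \<in> VMin")
    case True
    obtain e0 where e0: "e0 \<in> S" "Min (f m ` S) = f m e0" using Min_in[OF fin[of m] ne[of m]] by auto
    have "Min (f p ` S) \<le> f p e0" using Min_le[OF fin] e0 by auto
    then show ?thesis using e0 XS True unfolding S_def f_def by auto
  next
    case False
    obtain e0 where e0: "e0 \<in> S" "Max (f p ` S) = f p e0" using Max_in[OF fin[of p] ne[of p]] by auto
    have "f m e0 \<le> Max (f m ` S)" using Max_ge[OF fin] e0 by auto
    then show ?thesis using e0 XS False unfolding S_def f_def by auto
  qed
qed


lemma W_append[simp]: "W (xs @ ys) = W xs + W ys" by (simp add: W_def)
lemma W_single[simp]: "W [e] = w e" by (simp add: W_def)

lemma main:
  assumes "pth E v es" "distinct (vs v es)" "set (butlast (vs v es)) \<subseteq> - VT"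
    "\<forall>j\<le>length es. X (card (- VT)) v \<le> ereal (real_of_int (W (take j es))) + X (card (- VT) - j) (last_vertex v (take j es))"
    "d \<ge> 0"
  shows "X (card (- VT)) v \<le> ereal (real_of_int (d + W es)) + X m (last_vertex v es)"
  using assms
proof (induction m arbitrary: es d)
  case (0 es d)
  define u where "u = last_vertex v es"
  show ?case
  proof (cases "u \<in> VT")
    case True
    have "X (card (- VT)) v \<le> ereal (real_of_int (W es)) + X 0 u"
      using "0.prems"(4)[rule_format, OF order_refl] X_VT[OF True, of "card (- VT) - length es"] X_VT[OF True, of 0] unfolding u_def
      by simp
    also have "\<dots> \<le> ereal (real_of_int (d + W es)) + X 0 u"
      using "0.prems"(5) by (intro add_right_mono) simp
    finally show ?thesis unfolding u_def .
  next
    case False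
    then have "X 0 u = \<infinity>" by (simp add: X_def x0_vec_def)
    then show ?thesis unfolding u_def by simp
  qed
next
  case (Suc m es d)
  define u where "u = last_vertex v es"
  define n where "n = card (- VT)"
  have good: "\<And>j. j \<le> length es \<Longrightarrow> X n v \<le> ereal (real_of_int (W (take j es))) + X (n - j) (last_vertex v (take j es))"
    using Suc.prems(4) unfolding n_def by auto
  show ?case
  proof (cases "u \<in> VT")
    case True
    have "X (card (- VT)) v \<le> ereal (real_of_int (W es)) + X (Suc m) u"
      using Suc.prems(4)[rule_format, OF order_refl] X_VT[OF True, of "card (- VT) - length es"] X_VT[OF True, of "Suc m"] unfolding u_def
      by simp
    also have "\<dots> \<le> ereal (real_of_int (d + W es)) + X (Suc m) u"
      using Suc.prems(5) by (intro add_right_mono) simp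
    finally show ?thesis unfolding u_def .
  next
    case False
    have vsdec: "vs v es = butlast (vs v es) @ [u]"
      using last_vs[of v es] append_butlast_last_id[of "vs v es"] unfolding u_def by (simp add: vs_def)
    have vsVT: "set (vs v es) \<subseteq> - VT"
    proof
      fix x assume "x \<in> set (vs v es)"
      then have "x \<in> set (butlast (vs v es) @ [u])" by (subst (asm) vsdec)
      then show "x \<in> - VT" using Suc.prems(3) False by auto
    qed
    have "length (vs v es) = card (set (vs v es))" using Suc.prems(2) by (simp add: distinct_card)
    also have "\<dots> \<le> n" unfolding n_def by (rule card_mono[OF _ vsVT]) simp
    finally have len: "Suc (length es) \<le> n" by (simp add: vs_def)
    obtain p where p: "n - length es = Suc p" using len by (intro that[of "n - length es - 1"]) arith
    obtain e where e: "e \<in> E" "src e = u" and ea: "ereal (real_of_int (w e)) + X m (tgt e) \<le> X (Suc m) u"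
      and eb: "X (Suc p) u \<le> ereal (real_of_int (w e)) + X p (tgt e)"
      using choose_edge[OF False, of m p] by auto
    define u' where "u' = tgt e"
    have gu: "X n v \<le> ereal (real_of_int (W es)) + X (Suc p) u"
      using good[of "length es"] p unfolding u_def by simp
    have key: "ereal (real_of_int (d + W es + w e)) + X m u' \<le> ereal (real_of_int (d + W es)) + X (Suc m) u"
    proof -
      have "ereal (real_of_int (d + W es + w e)) + X m u' = ereal (real_of_int (d + W es)) + (ereal (real_of_int (w e)) + X m u')"
        by (simp only: ereal_int_add add.assoc)
      also have "\<dots> \<le> ereal (real_of_int (d + W es)) + X (Suc m) u"
        using ea unfolding u'_def by (rule add_left_mono)
      finally show ?thesis .
    qed
    have pe: "pth E u [e]" using e by simp
    show ?thesis
    proof (cases "u' \<in> set (vs v es)")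
      case True
      then obtain j where j: "j < length (vs v es)" "vs v es ! j = u'" by (metis in_set_conv_nth)
      then have jl: "j \<le> length es" by (simp add: vs_def)
      define es1 where "es1 = take j es"
      define cs where "cs = drop j es @ [e]"
      have lv1: "last_vertex v es1 = u'"
        using j last_vs[of v es1] unfolding es1_def vs_take by (simp add: take_Suc_conv_app_nth)
      have es_split: "es = es1 @ drop j es" unfolding es1_def by simp
      have p1: "pth E v es1" and p2: "pth E u' (drop j es)"
        using Suc.prems(1) es_split pth_append[of E v es1 "drop j es"] lv1 by auto
      have lvd: "last_vertex u' (drop j es) = u"
        using lv_append[of v es1 "drop j es"] es_split lv1 unfolding u_def by simp
      have pc1: "pth E u' cs" unfolding cs_def using pth_append[of E u' "drop j es" "[e]"] p2 lvd pe by simp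
      have lvc: "last_vertex u' cs = u'" unfolding cs_def u'_def by (simp add: last_vertex_def)
      have cyc: "is_cycle E cs" using pth_cycle[OF pc1 _ lvc] unfolding cs_def by simp
      have "cycle_vertices cs \<subseteq> set (vs u' cs)" using pth_verts[OF pc1] by (simp add: cycle_vertices_def)
      also have "\<dots> \<subseteq> set (vs v es)"
      proof -
        have "set (map tgt (drop j es)) \<subseteq> set (map tgt es)" by (metis drop_map set_drop_subset)
        then show ?thesis using True unfolding cs_def vs_def u'_def by auto
      qed
      finally have "cycle_vertices cs \<subseteq> - VT" using vsVT by auto
      then have Cpos: "W cs > 0" using pc[OF cyc] by (simp add: cycle_weight_def W_def)
      have Weq: "d + W cs + W es1 = d + W es + w e"
      proof -
        have "W es = W es1 + W (drop j es)" using es_split W_append by metis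
        then show ?thesis unfolding cs_def by simp
      qed
      have "X (card (- VT)) v \<le> ereal (real_of_int (d + W cs + W es1)) + X m (last_vertex v es1)"
      proof (rule Suc.IH)
        show "pth E v es1" by (rule p1)
        show "distinct (vs v es1)" using Suc.prems(2) unfolding es1_def vs_take by simp
        show "set (butlast (vs v es1)) \<subseteq> - VT" using vsVT unfolding es1_def vs_take
          by (meson in_set_butlastD in_set_takeD subset_iff)
        show "\<forall>j'\<le>length es1. X (card (- VT)) v \<le> ereal (real_of_int (W (take j' es1))) + X (card (- VT) - j') (last_vertex v (take j' es1))"
          using good jl unfolding es1_def n_def by (simp add: min_def)
        show "0 \<le> d + W cs" using Cpos Suc.prems(5) by simp
      qed
      then have "X n v \<le> ereal (real_of_int (d + W es + w e)) + X m u'" using Weq lv1 n_def by simp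
      then show ?thesis using key unfolding u_def n_def by simp
    next
      case False
      define es2 where "es2 = es @ [e]"
      have lv2: "last_vertex v es2 = u'" unfolding es2_def u'_def by (simp add: last_vertex_def)
      have vs2: "vs v es2 = vs v es @ [u']" unfolding es2_def vs_def u'_def by simp
      have "X (card (- VT)) v \<le> ereal (real_of_int (d + W es2)) + X m (last_vertex v es2)"
      proof (rule Suc.IH)
        show "pth E v es2" unfolding es2_def using Suc.prems(1) pe pth_append[of E v es "[e]"] unfolding u_def by simp
        show "distinct (vs v es2)" using Suc.prems(2) False vs2 by simp
        show "set (butlast (vs v es2)) \<subseteq> - VT" using vsVT vs2 by simp
        show "\<forall>j\<le>length es2. X (card (- VT)) v \<le> ereal (real_of_int (W (take j es2))) + X (card (- VT) - j) (last_vertex v (take j es2))"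
        proof (intro allI impI)
          fix j assume jl: "j \<le> length es2"
          show "X (card (- VT)) v \<le> ereal (real_of_int (W (take j es2))) + X (card (- VT) - j) (last_vertex v (take j es2))"
          proof (cases "j \<le> length es")
            case True
            then show ?thesis using good[OF True] unfolding es2_def n_def by simp
          next
            case False
            then have jj: "j = Suc (length es)" using jl unfolding es2_def by simp
            have "X n v \<le> ereal (real_of_int (W es)) + X (Suc p) u" by (rule gu)
            also have "\<dots> \<le> ereal (real_of_int (W es)) + (ereal (real_of_int (w e)) + X p u')"
              using eb unfolding u'_def by (rule add_left_mono)
            also have "\<dots> = ereal (real_of_int (W es2)) + X p u'"
              unfolding es2_def by (simp only: W_append W_single ereal_int_add add.assoc)
            finally have fin: "X n v \<le> ereal (real_of_int (W es2)) + X p u'" .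
            have t: "take j es2 = es2" using jj unfolding es2_def by simp
            have q: "card (- VT) - j = p" using jj p unfolding n_def by simp
            show ?thesis unfolding t q lv2 using fin unfolding n_def .
          qed
        qed
        show "0 \<le> d" by (rule Suc.prems(5))
      qed
      then have "X n v \<le> ereal (real_of_int (d + W es + w e)) + X m u'"
        using lv2 n_def unfolding es2_def by (simp add: add.assoc)
      then show ?thesis using key unfolding u_def n_def by simp
    qed
  qed
qed

lemma X_ge: "X (card (- VT)) v \<le> X m v"
  using main[of v "[]" 0 m] by (simp add: vs_def W_def)

lemma stab: "X (card (- VT) + k) = X (card (- VT))"
proof
  fix v show "X (card (- VT) + k) v = X (card (- VT)) v"
    using X_ge[of v "card (- VT) + k"] X_dec2[of "card (- VT)" k v] by (rule antisym[rotated])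
qed

end

theorem proposition2:
  fixes VMin VT :: "'v::finite set"
    and E :: "('v, 'a) edge set"
    and w :: "('v, 'a) edge \<Rightarrow> int"
    and c :: "'v \<Rightarrow> int"
  assumes game: "weighted_game VMin VT E"
    and sc: "strongly_connected_on E (- VT)"
    and poscyc: "\<And>es. is_cycle E es \<Longrightarrow> cycle_vertices es \<subseteq> - VT \<Longrightarrow> cycle_weight w es > 0"
    and finval: "\<And>v. game_value VMin VT E w c v \<noteq> \<infinity>"
  shows "\<forall>k. (F_op VMin VT E w c ^^ (card (- VT) + k)) (x0_vec VT c)
            = (F_op VMin VT E w c ^^ card (- VT)) (x0_vec VT c)"
proof -
  interpret gm VMin VT E w c
    using game poscyc by unfold_locales (auto simp: weighted_game_def)
  show ?thesis using stab unfolding X_def by blast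
qed

end
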